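(* Let $1\le h\le n$, $B=(b_{i,j})\in\Theta_\vartriangle(n,r)$ and $\lambda=\mathrm{ro}(B)$. (1) If $\varepsilon\in\{1,-1\}$ and $\lambda_{h+\varepsilon}\ge1$, then $$[E^\vartriangle_{h,h+\varepsilon}+\mathrm{diag}(\lambda-\mathbf e_{h+\varepsilon})]_1[B]_1=\sum_{i\in\mathbb Z,\ b_{h+\varepsilon,i}\ge1}(b_{h,i}+1)[B+E^\vartriangle_{h,i}-E^\vartriangle_{h+\varepsilon,i}]_1.$$ (2) If $m\in\mathbb Z\setminus\{0\}$ and $\lambda_h\ge1$, then $$[E^\vartriangle_{h,h+mn}+\mathrm{diag}(\lambda-\mathbf e_h)]_1[B]_1=\sum_{s\in\mathbb Z,\ b_{h,s}\ge1}(b_{h,s+mn}+1)[B+E^\vartriangle_{h,s+mn}-E^\vartriangle_{h,s}]_1.$$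
   Context: Fix $n\ge2$, $r\ge1$. $I_\vartriangle(n,r)$ is the set of integer sequences $\mathbf i=(i_k)_{k\in\mathbb Z}$ with $i_{k+r}=i_k+n$. $\Omega_{\mathbb Q}^{\otimes r}$ is the $\mathbb Q$-space with basis $\omega_{\mathbf i}$ ($\mathbf i\in I_\vartriangle(n,r)$), with right action of the affine symmetric group $\mathfrak S_{\vartriangle,r}$ (bijections $w:\mathbb Z\to\mathbb Z$, $w(k+r)=w(k)+r$) given by $\omega_{\mathbf i}w=\omega_{\mathbf iw}$, $(\mathbf iw)_k=i_{w(k)}$; $\mathcal S_\vartriangle(n,r)_{\mathbb Q}=\mathrm{End}_{\mathbb Q\mathfrak S_{\vartriangle,r}}(\Omega_{\mathbb Q}^{\otimes r})$ with composition as product. $\Theta_\vartriangle(n,r)$ is the set of matrices $A=(a_{k,l})_{k,l\in\mathbb Z}$ over $\mathbb N$ with $a_{k+n,l+n}=a_{k,l}$, finitely many nonzero entries per row, and $\sum_{1\le k\le n,\,l}a_{k,l}=r$; $\mathrm{ro}(A)=(\sum_la_{k,l})_{k\in\mathbb Z}$. For $\mathbf i,\mathbf j\in I_\vartriangle(n,r)$ let $M(\mathbf i,\mathbf j)=(a_{k,l})$ with $a_{k,l}=|\{s\in\mathbb Z\mid i_s=k,\ j_s=l\}|$; $[A]_1$ is the map $\omega_{\mathbf j}\mapsto\sum_{\mathbf i:\,M(\mathbf i,\mathbf j)=A}\omega_{\mathbf i}$, and $[A]_1:=0$ if $A$ has a negative entry. $E^\vartriangle_{i,j}$ has $1$ at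 positions $(i+sn,j+sn)$, $s\in\mathbb Z$, and $0$ elsewhere; $\mathbf e_h$ is the $n$-periodic unit vector; $\mathrm{diag}(\mu)$ is the diagonal matrix with entries $\mu_i$; indices are read mod $n$ where relevant. *)

theory Defs
  imports Complex_Main
begin

definition Idelta :: "nat \<Rightarrow> nat \<Rightarrow> (int \<Rightarrow> int) set" where
  "Idelta n r = {i. \<forall>k. i (k + int r) = i k + int n}"

text \<open>Vectors of Omega_Q^{tensor r}: finitely supported coefficient functions on the
  basis omega_i, i in Idelta n r.\<close>
definition Omega :: "nat \<Rightarrow> nat \<Rightarrow> ((int \<Rightarrow> int) \<Rightarrow> rat) set" where
  "Omega n r = {v. finite {j. v j \<noteq> 0} \<and> {j. v j \<noteq> 0} \<subseteq> Idelta n r}"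

definition Mmat :: "(int \<Rightarrow> int) \<Rightarrow> (int \<Rightarrow> int) \<Rightarrow> int \<Rightarrow> int \<Rightarrow> int" where
  "Mmat i j = (\<lambda>k l. int (card {s. i s = k \<and> j s = l}))"

definition ro :: "(int \<Rightarrow> int \<Rightarrow> int) \<Rightarrow> int \<Rightarrow> int" where
  "ro A = (\<lambda>k. \<Sum>l\<in>{l. A k l \<noteq> 0}. A k l)"

definition Theta :: "nat \<Rightarrow> nat \<Rightarrow> (int \<Rightarrow> int \<Rightarrow> int) set" where
  "Theta n r = {A. (\<forall>k l. A (k + int n) (l + int n) = A k l) \<and> (\<forall>k l. 0 \<le> A k l)
      \<and> (\<forall>k. finite {l. A k l \<noteq> 0}) \<and> (\<Sum>k\<in>{1..int n}. ro A k) = int r}"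

definition Edelta :: "nat \<Rightarrow> int \<Rightarrow> int \<Rightarrow> int \<Rightarrow> int \<Rightarrow> int" where
  "Edelta n i j = (\<lambda>k l. if \<exists>s::int. k = i + s * int n \<and> l = j + s * int n then 1 else 0)"

definition evec :: "nat \<Rightarrow> int \<Rightarrow> int \<Rightarrow> int" where
  "evec n h = (\<lambda>k. if k mod int n = h mod int n then 1 else 0)"

definition diagm :: "(int \<Rightarrow> int) \<Rightarrow> int \<Rightarrow> int \<Rightarrow> int" where
  "diagm \<mu> = (\<lambda>k l. if k = l then \<mu> k else 0)"

text \<open>The map [A]_1 on Omega: omega_j |-> sum of omega_i with M(i,j) = A,
  extended linearly; it is 0 if A has a negative entry.\<close>
definition stdmap :: "nat \<Rightarrow> nat \<Rightarrow> (int \<Rightarrow> int \<Rightarrow> int) \<Rightarrow> ((int \<Rightarrow> int) \<Rightarrow> rat) \<Rightarrow> ((int \<Rightarrow> int) \<Rightarrow> rat)" where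
  "stdmap n r A v = (\<lambda>i. if (\<forall>k l. 0 \<le> A k l) \<and> i \<in> Idelta n r
      then (\<Sum>j\<in>{j. v j \<noteq> 0}. if Mmat i j = A then v j else 0) else 0)"

end

theory Submission
  imports Defs "HOL-Library.FuncSet"
begin


lemma per1_shift:
  fixes f :: "int \<Rightarrow> int" and c :: int
  assumes "\<forall>s. f (s + c) = f s + e"
  shows "f (s + q * c) = f s + q * e"
proof -
  have "\<forall>s. f (s + q * c) = f s + q * e"
  proof (induction q rule: int_induct[where k=0])
    case base then show ?case by simp
  next
    case (step1 i)
    show ?case
    proof
      fix s
      have "f (s + (i+1) * c) = f ((s + i*c) + c)" by (simp add: algebra_simps)
      also have "\<dots> = f (s + i*c) + e" using assms by blast
      finally show "f (s + (i + 1) * c) = f s + (i + 1) * e" using step1(2) by (simp add: algebra_simps)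
    qed
  next
    case (step2 i)
    show ?case
    proof
      fix s
      have "f (s + i*c) = f ((s + (i - 1)*c) + c)" by (simp add: algebra_simps)
      also have "\<dots> = f (s + (i-1)*c) + e" using assms by blast
      finally show "f (s + (i - 1) * c) = f s + (i - 1) * e" using step2(2) by (simp add: algebra_simps)
    qed
  qed
  then show ?thesis by blast
qed

lemma per2_shift:
  fixes f :: "int \<Rightarrow> int \<Rightarrow> 'a" and c :: int
  assumes "\<forall>k l. f (k + c) (l + c) = f k l"
  shows "f (k + q * c) (l + q * c) = f k l"
proof -
  have "\<forall>k l. f (k + q * c) (l + q * c) = f k l"
  proof (induction q rule: int_induct[where k=0])
    case base then show ?case by simp
  next
    case (step1 i)
    show ?case
    proof (intro allI)
      fix k l
      have "f (k + (i+1) * c) (l + (i+1)*c) = f ((k + i*c) + c) ((l + i*c) + c)" by (simp add: algebra_simps)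
      also have "\<dots> = f (k + i*c) (l + i*c)" using assms by blast
      finally show "f (k + (i+1) * c) (l + (i+1)*c) = f k l" using step1(2) by simp
    qed
  next
    case (step2 i)
    show ?case
    proof (intro allI)
      fix k l
      have "f (k + (i - 1) * c) (l + (i - 1)*c) = f ((k + (i-1)*c) + c) ((l + (i-1)*c) + c)" using assms by simp
      also have "\<dots> = f (k + i*c) (l + i*c)" by (simp add: algebra_simps)
      finally show "f (k + (i - 1) * c) (l + (i - 1)*c) = f k l" using step2(2) by simp
    qed
  qed
  then show ?thesis by blast
qed

lemma Idelta_shift:
  assumes "i \<in> Idelta n r"
  shows "i (s + q * int r) = i s + q * int n"
  using per1_shift[of i "int r" "int n"] assms by (simp add: Idelta_def)

lemma Idelta_decomp:
  assumes "i \<in> Idelta n r" "r > 0"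
  shows "i s = i (s mod int r) + (s div int r) * int n"
proof -
  have "i s = i (s mod int r + (s div int r) * int r)" by simp
  also have "\<dots> = i (s mod int r) + (s div int r) * int n" using Idelta_shift[OF assms(1)] by blast
  finally show ?thesis .
qed

lemma Idelta_eq_on_P:
  assumes "i \<in> Idelta n r" "k \<in> Idelta n r" "r > 0" "\<And>s. s \<in> {0..<int r} \<Longrightarrow> i s = k s"
  shows "i = k"
proof
  fix s
  have "s mod int r \<in> {0..<int r}" using assms(3) by simp
  then show "i s = k s" using Idelta_decomp[OF assms(1,3), of s] Idelta_decomp[OF assms(2,3), of s] assms(4) by simp
qed

lemma Edelta_eq:
  "Edelta n x y a b = (if int n dvd (a - x) \<and> b - y = a - x then 1 else 0)"
proof -
  have "(\<exists>s::int. a = x + s * int n \<and> b = y + s * int n) \<longleftrightarrow> (int n dvd (a - x) \<and> b - y = a - x)"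
  proof
    assume "\<exists>s::int. a = x + s * int n \<and> b = y + s * int n"
    then obtain s where "a = x + s * int n" "b = y + s * int n" by blast
    then show "int n dvd (a - x) \<and> b - y = a - x" by simp
  next
    assume "int n dvd (a - x) \<and> b - y = a - x"
    then obtain s where "a - x = int n * s" "b - y = a - x" by (auto elim: dvdE)
    then have "a = x + s * int n \<and> b = y + s * int n" by (simp add: algebra_simps)
    then show "\<exists>s::int. a = x + s * int n \<and> b = y + s * int n" by blast
  qed
  then show ?thesis unfolding Edelta_def by simp
qed

lemma Edelta_shift: "Edelta n (x + q * int n) (y + q * int n) = Edelta n x y"
proof (intro ext)
  fix a b
  have "int n dvd (a - (x + q * int n)) \<longleftrightarrow> int n dvd (a - x)"
    by (metis diff_diff_eq dvd_diff_left_iff dvd_triv_right)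
  then show "Edelta n (x + q * int n) (y + q * int n) a b = Edelta n x y a b"
    unfolding Edelta_eq by (auto simp: algebra_simps)
qed

lemma Edelta_01: "Edelta n x y a b = 0 \<or> Edelta n x y a b = 1"
  by (simp add: Edelta_eq)

lemma Edelta_self: "Edelta n x y x y = 1"
  by (simp add: Edelta_eq)

lemma Mmat_sum:
  assumes i: "i \<in> Idelta n r" and j: "j \<in> Idelta n r" and n: "n > 0" and r: "r > 0"
  shows "Mmat i j a b = (\<Sum>s\<in>{0..<int r}. Edelta n (i s) (j s) a b)"
proof -
  let ?C = "\<lambda>s. int n dvd (a - i s) \<and> b - j s = a - i s"
  have bij: "bij_betw (\<lambda>s. s mod int r) {s. i s = a \<and> j s = b} {s\<in>{0..<int r}. ?C s}"
  proof (rule bij_betwI')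
    fix s s' assume s: "s \<in> {s. i s = a \<and> j s = b}" and s': "s' \<in> {s. i s = a \<and> j s = b}"
    show "(s mod int r = s' mod int r) = (s = s')"
    proof
      assume eq: "s mod int r = s' mod int r"
      have e1: "a = i (s' mod int r) + (s div int r) * int n" using Idelta_decomp[OF i r, of s] s eq by simp
      have e2: "a = i (s' mod int r) + (s' div int r) * int n" using Idelta_decomp[OF i r, of s'] s' by simp
      from e1 e2 have "(s div int r) * int n = (s' div int r) * int n" by linarith
      then have "s div int r = s' div int r" using n by auto
      then show "s = s'" using eq by (metis mod_div_mult_eq)
    qed simp
  next
    fix s assume s: "s \<in> {s. i s = a \<and> j s = b}"
    have "i s = i (s mod int r) + (s div int r) * int n" using Idelta_decomp[OF i r] .
    moreover have "j s = j (s mod int r) + (s div int r) * int n" using Idelta_decomp[OF j r] .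
    ultimately have "a - i (s mod int r) = int n * (s div int r)" "b - j (s mod int r) = a - i (s mod int r)"
      using s by (simp_all add: algebra_simps)
    then show "s mod int r \<in> {s\<in>{0..<int r}. ?C s}" using r by auto
  next
    fix y assume y: "y \<in> {s\<in>{0..<int r}. ?C s}"
    then obtain q where q: "a - i y = int n * q" and bj: "b - j y = a - i y" by (auto elim: dvdE)
    let ?x = "y + q * int r"
    have "i ?x = a" using Idelta_shift[OF i, of y q] q by (simp add: algebra_simps)
    moreover have "j ?x = b" using Idelta_shift[OF j, of y q] q bj by (simp add: algebra_simps)
    moreover have "?x mod int r = y" using y by simp
    ultimately show "\<exists>x\<in>{s. i s = a \<and> j s = b}. y = x mod int r" by force
  qed
  have "Mmat i j a b = int (card {s\<in>{0..<int r}. ?C s})"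
    unfolding Mmat_def using bij_betw_same_card[OF bij] by simp
  also have "\<dots> = (\<Sum>s\<in>{s\<in>{0..<int r}. ?C s}. 1)" by simp
  also have "\<dots> = (\<Sum>s\<in>{0..<int r}. if ?C s then 1 else 0)"
    by (rule sum.inter_filter) simp
  also have "\<dots> = (\<Sum>s\<in>{0..<int r}. Edelta n (i s) (j s) a b)"
    by (simp add: Edelta_eq)
  finally show ?thesis .
qed



lemma Theta_shift:
  assumes "B \<in> Theta n r"
  shows "B (k + q * int n) (l + q * int n) = B k l"
  using per2_shift[of B "int n" k q l] assms by (simp add: Theta_def)

lemma ro_shift:
  assumes "B \<in> Theta n r"
  shows "ro B (k + q * int n) = ro B k"
  unfolding ro_def
proof (rule sum.reindex_bij_witness[where i="\<lambda>l. l + q * int n" and j="\<lambda>l. l - q * int n"])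
  show "\<And>a. a \<in> {l. B (k + q * int n) l \<noteq> 0} \<Longrightarrow> a - q * int n + q * int n = a" by simp
  show "\<And>a. a \<in> {l. B (k + q * int n) l \<noteq> 0} \<Longrightarrow> a - q * int n \<in> {l. B k l \<noteq> 0}"
    using Theta_shift[OF assms, of k q] by (metis diff_add_cancel mem_Collect_eq)
  show "\<And>b. b \<in> {l. B k l \<noteq> 0} \<Longrightarrow> b + q * int n - q * int n = b" by simp
  show "\<And>b. b \<in> {l. B k l \<noteq> 0} \<Longrightarrow> b + q * int n \<in> {l. B (k + q * int n) l \<noteq> 0}"
    using Theta_shift[OF assms] by simp
  show "\<And>a. a \<in> {l. B (k + q * int n) l \<noteq> 0} \<Longrightarrow> B k (a - q * int n) = B (k + q * int n) a"
    using Theta_shift[OF assms, of k q] by (metis diff_add_cancel)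
qed

lemma ro_nonneg:
  assumes "B \<in> Theta n r"
  shows "0 \<le> ro B k"
  unfolding ro_def using assms by (auto simp: Theta_def intro: sum_nonneg)

lemma col_finite:
  assumes B: "B \<in> Theta n r" and n: "n > 0"
  shows "finite {a. B a l \<noteq> 0}"
proof (rule finite_subset)
  show "{a. B a l \<noteq> 0} \<subseteq> (\<Union>c\<in>{0..<int n}. (\<lambda>l'. c + (l - l')) ` {l'. B c l' \<noteq> 0})"
  proof
    fix a assume a: "a \<in> {a. B a l \<noteq> 0}"
    let ?c = "a mod int n" and ?q = "a div int n"
    have "B a l = B (?c + ?q * int n) ((l - ?q * int n) + ?q * int n)" by simp
    also have "\<dots> = B ?c (l - ?q * int n)" by (rule Theta_shift[OF B])
    finally have "B ?c (l - ?q * int n) \<noteq> 0" using a by simp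
    moreover have "a = ?c + (l - (l - ?q * int n))" by simp
    moreover have "?c \<in> {0..<int n}" using n by simp
    ultimately show "a \<in> (\<Union>c\<in>{0..<int n}. (\<lambda>l'. c + (l - l')) ` {l'. B c l' \<noteq> 0})" by blast
  qed
  show "finite (\<Union>c\<in>{0..<int n}. (\<lambda>l'. c + (l - l')) ` {l'. B c l' \<noteq> 0})"
    using B by (auto simp: Theta_def)
qed

lemma Mmat_ge_term:
  assumes i: "i \<in> Idelta n r" and j: "j \<in> Idelta n r" and n: "n > 0" and r: "r > 0"
    and s: "s \<in> {0..<int r}"
  shows "Edelta n (i s) (j s) a b \<le> Mmat i j a b"
  unfolding Mmat_sum[OF i j n r]
  by (rule member_le_sum[OF s]) (auto simp: Edelta_eq)

lemma ro_Mmat: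
  assumes i: "i \<in> Idelta n r" and j: "j \<in> Idelta n r" and n: "n > 0" and r: "r > 0"
  shows "ro (Mmat i j) a = (\<Sum>s\<in>{0..<int r}. evec n (i s) a)"
proof -
  let ?P = "{0..<int r}"
  let ?Z = "{b. Mmat i j a b \<noteq> 0}"
  let ?Z' = "(\<lambda>s. j s + (a - i s)) ` ?P"
  have ZZ: "?Z \<subseteq> ?Z'"
  proof
    fix b assume "b \<in> ?Z"
    then have "(\<Sum>s\<in>?P. Edelta n (i s) (j s) a b) \<noteq> 0" using Mmat_sum[OF i j n r] by simp
    then obtain s where "s \<in> ?P" "Edelta n (i s) (j s) a b \<noteq> 0" by (meson sum.neutral)
    then show "b \<in> ?Z'" by (auto simp: Edelta_eq split: if_splits intro!: image_eqI[where x=s])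
  qed
  have "ro (Mmat i j) a = (\<Sum>b\<in>?Z'. Mmat i j a b)"
    unfolding ro_def by (rule sum.mono_neutral_left) (use ZZ in auto)
  also have "\<dots> = (\<Sum>b\<in>?Z'. \<Sum>s\<in>?P. Edelta n (i s) (j s) a b)"
    using Mmat_sum[OF i j n r] by simp
  also have "\<dots> = (\<Sum>s\<in>?P. \<Sum>b\<in>?Z'. Edelta n (i s) (j s) a b)" by (rule sum.swap)
  also have "\<dots> = (\<Sum>s\<in>?P. evec n (i s) a)"
  proof (rule sum.cong[OF refl])
    fix s assume s: "s \<in> ?P"
    let ?b = "j s + (a - i s)"
    have bin: "?b \<in> ?Z'" using s by blast
    have "(\<Sum>b\<in>?Z'. Edelta n (i s) (j s) a b) = (\<Sum>b\<in>?Z'. if b = ?b then (if int n dvd (a - i s) then 1 else 0) else 0)"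
      by (rule sum.cong[OF refl]) (auto simp: Edelta_eq)
    also have "\<dots> = (if int n dvd (a - i s) then 1 else 0)" using bin by simp
    also have "\<dots> = evec n (i s) a" unfolding evec_def by (auto simp: mod_eq_dvd_iff)
    finally show "(\<Sum>b\<in>?Z'. Edelta n (i s) (j s) a b) = evec n (i s) a" .
  qed
  finally show ?thesis .
qed

lemma Mmat_diag:
  assumes i: "i \<in> Idelta n r" and n: "n > 0" and r: "r > 0"
  shows "Mmat i i a b = (if a = b then (\<Sum>s\<in>{0..<int r}. evec n (i s) a) else 0)"
  unfolding Mmat_sum[OF i i n r]
  by (auto simp: Edelta_eq evec_def mod_eq_dvd_iff intro!: sum.cong)

lemma evec_shift: "evec n (x + q * int n) = evec n x"
  unfolding evec_def by simp

definition upd :: "(int \<Rightarrow> int) \<Rightarrow> nat \<Rightarrow> int \<Rightarrow> int \<Rightarrow> int \<Rightarrow> int" where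
  "upd i r d s0 = (\<lambda>s. if s mod int r = s0 then i s + d else i s)"

lemma upd_Idelta:
  assumes "i \<in> Idelta n r"
  shows "upd i r d s0 \<in> Idelta n r"
  using assms unfolding Idelta_def upd_def by auto

lemma upd_P:
  assumes "s \<in> {0..<int r}"
  shows "upd i r d s0 s = (if s = s0 then i s + d else i s)"
  using assms unfolding upd_def by simp

lemma sum_split_one:
  fixes g :: "int \<Rightarrow> 'a::ab_group_add"
  assumes "finite P" "s0 \<in> P" "\<And>s. s \<in> P \<Longrightarrow> s \<noteq> s0 \<Longrightarrow> g s = f s"
  shows "sum g P = sum f P - f s0 + g s0"
proof -
  have "sum g P = g s0 + sum g (P - {s0})" using sum.remove[OF assms(1,2)] .
  also have "sum g (P - {s0}) = sum f (P - {s0})" using assms(3) by (intro sum.cong) auto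
  also have "sum f (P - {s0}) = sum f P - f s0" using sum.remove[OF assms(1,2), of f] by simp
  finally show ?thesis by simp
qed

lemma Bl_inj:
  assumes "d \<noteq> 0"
    and eq: "(\<lambda>a b. B a b + Edelta n h l a b - Edelta n (h+d) l a b) = (\<lambda>a b. B a b + Edelta n h l' a b - Edelta n (h+d) l' a b)"
  shows "l = l'"
proof (rule ccontr)
  assume ne: "l \<noteq> l'"
  have "B h l + Edelta n h l h l - Edelta n (h+d) l h l = B h l + Edelta n h l' h l - Edelta n (h+d) l' h l"
    using fun_cong[OF fun_cong[OF eq, of h], of l] by simp
  moreover have "Edelta n h l h l = 1" by (rule Edelta_self)
  moreover have "Edelta n (h+d) l h l = 0" using assms(1) by (simp add: Edelta_eq)
  moreover have "Edelta n h l' h l = 0" using ne by (simp add: Edelta_eq)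
  moreover have "Edelta n (h+d) l' h l \<ge> 0" by (simp add: Edelta_eq)
  ultimately show False by linarith
qed



lemma upd_Mmat_left:
  assumes i: "i \<in> Idelta n r" and j: "j \<in> Idelta n r" and n: "n > 0" and r: "r > 0"
    and s0: "s0 \<in> {0..<int r}"
  shows "Mmat (upd i r d s0) j a b = Mmat i j a b - Edelta n (i s0) (j s0) a b + Edelta n (i s0 + d) (j s0) a b"
proof -
  have "(\<Sum>s\<in>{0..<int r}. Edelta n (upd i r d s0 s) (j s) a b) = (\<Sum>s\<in>{0..<int r}. Edelta n (i s) (j s) a b) - Edelta n (i s0) (j s0) a b + Edelta n (upd i r d s0 s0) (j s0) a b"
    by (rule sum_split_one) (use s0 in \<open>auto simp: upd_P\<close>)
  then show ?thesis unfolding Mmat_sum[OF upd_Idelta[OF i] j n r] Mmat_sum[OF i j n r] using s0 by (simp add: upd_P)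
qed

lemma upd_Mmat_right:
  assumes i: "i \<in> Idelta n r" and n: "n > 0" and r: "r > 0"
    and s0: "s0 \<in> {0..<int r}"
  shows "Mmat i (upd i r d s0) a b = Mmat i i a b - Edelta n (i s0) (i s0) a b + Edelta n (i s0) (i s0 + d) a b"
proof -
  have "(\<Sum>s\<in>{0..<int r}. Edelta n (i s) (upd i r d s0 s) a b) = (\<Sum>s\<in>{0..<int r}. Edelta n (i s) (i s) a b) - Edelta n (i s0) (i s0) a b + Edelta n (i s0) (upd i r d s0 s0) a b"
    by (rule sum_split_one) (use s0 in \<open>auto simp: upd_P\<close>)
  then show ?thesis unfolding Mmat_sum[OF i upd_Idelta[OF i] n r] Mmat_sum[OF i i n r] using s0 by (simp add: upd_P)
qed

lemma upd_content:
  assumes s0: "s0 \<in> {0..<int r}"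
  shows "(\<Sum>s\<in>{0..<int r}. evec n (upd i r d s0 s) a) = (\<Sum>s\<in>{0..<int r}. evec n (i s) a) - evec n (i s0) a + evec n (i s0 + d) a"
proof -
  have "(\<Sum>s\<in>{0..<int r}. evec n (upd i r d s0 s) a) = (\<Sum>s\<in>{0..<int r}. evec n (i s) a) - evec n (i s0) a + evec n (upd i r d s0 s0) a"
    by (rule sum_split_one) (use s0 in \<open>auto simp: upd_P\<close>)
  then show ?thesis using s0 by (simp add: upd_P)
qed

lemma lemX:
  assumes n: "n > 0" and r: "r > 0" and d: "d \<noteq> 0"
    and i: "i \<in> Idelta n r" and k: "k \<in> Idelta n r"
    and M: "Mmat i k = (\<lambda>a b. Edelta n h (h+d) a b + diagm \<mu> a b)"
  shows "\<exists>s0\<in>{0..<int r}. int n dvd (i s0 - h) \<and> k = upd i r d s0"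
proof -
  let ?P = "{0..<int r}"
  let ?R = "{s\<in>?P. int n dvd (h - i s) \<and> k s = i s + d}"
  have "Mmat i k h (h+d) = 1" using M d by (simp add: Edelta_self diagm_def)
  also have "Mmat i k h (h+d) = (\<Sum>s\<in>?P. if int n dvd (h - i s) \<and> k s = i s + d then 1 else 0)"
    unfolding Mmat_sum[OF i k n r] by (rule sum.cong) (auto simp: Edelta_eq)
  also have "\<dots> = int (card ?R)"
    by (simp add: sum.inter_filter[symmetric])
  finally have cR: "card ?R = 1" by simp
  then obtain s0 where R: "?R = {s0}" by (meson card_1_singletonE)
  have sub: "s \<in> ?R" if s: "s \<in> ?P" "k s \<noteq> i s" for s
  proof -
    have "1 \<le> Mmat i k (i s) (k s)"
      using Mmat_ge_term[OF i k n r s(1), of "i s" "k s"] Edelta_self by simp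
    then have "1 \<le> Edelta n h (h+d) (i s) (k s)" using M s(2) by (simp add: diagm_def)
    then have "int n dvd (i s - h)" "k s - (h + d) = i s - h" by (auto simp: Edelta_eq split: if_splits)
    then show ?thesis using s by (auto simp: dvd_diff_commute)
  qed
  have s0: "s0 \<in> ?P" "int n dvd (h - i s0)" "k s0 = i s0 + d" using R by auto
  have "k = upd i r d s0"
  proof (rule Idelta_eq_on_P[OF k upd_Idelta[OF i] r])
    fix s assume s: "s \<in> ?P"
    show "k s = upd i r d s0 s"
    proof (cases "s = s0")
      case True then show ?thesis using s s0 by (simp add: upd_P)
    next
      case False
      then have "k s = i s" using sub[OF s] R by blast
      then show ?thesis using s False by (simp add: upd_P)
    qed
  qed
  then show ?thesis using s0 by (auto simp: dvd_diff_commute)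
qed



lemma core:
  assumes n: "n > 0" and r: "r > 0" and B: "B \<in> Theta n r" and d: "d \<noteq> 0"
    and i: "i \<in> Idelta n r" and j: "j \<in> Idelta n r"
  shows "int (card {k\<in>Idelta n r. Mmat i k = (\<lambda>a b. Edelta n h (h+d) a b + diagm (\<lambda>t. ro B t - evec n (h+d) t) a b) \<and> Mmat k j = B})
     = (\<Sum>l\<in>{l. B (h+d) l \<ge> 1}. (B h l + 1) * (if Mmat i j = (\<lambda>a b. B a b + Edelta n h l a b - Edelta n (h+d) l a b) then 1 else 0))"
proof -
  define A where "A = (\<lambda>a b. Edelta n h (h+d) a b + diagm (\<lambda>t. ro B t - evec n (h+d) t) a b)"
  define Bl where "Bl = (\<lambda>l a b. B a b + Edelta n h l a b - Edelta n (h+d) l a b)"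
  define K where "K = {k\<in>Idelta n r. Mmat i k = A \<and> Mmat k j = B}"
  define L where "L = {l. B (h+d) l \<ge> 1}"
  let ?P = "{0..<int r}"
  have finL: "finite L"
  proof (rule finite_subset)
    show "L \<subseteq> {l. B (h+d) l \<noteq> 0}" unfolding L_def by auto
    show "finite {l. B (h+d) l \<noteq> 0}" using B by (simp add: Theta_def)
  qed
  have key: "\<exists>s0\<in>?P. int n dvd (i s0 - h) \<and> k = upd i r d s0 \<and> Mmat i j = Bl (j s0 - (i s0 - h)) \<and> j s0 - (i s0 - h) \<in> L"
    if k: "k \<in> K" for k
  proof -
    from k have kI: "k \<in> Idelta n r" and kA: "Mmat i k = A" and kB: "Mmat k j = B" by (auto simp: K_def)
    obtain s0 where s0: "s0 \<in> ?P" "int n dvd (i s0 - h)" "k = upd i r d s0"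
      using lemX[OF n r d i kI kA[unfolded A_def]] by blast
    define t where "t = (i s0 - h) div int n"
    have it: "i s0 = h + t * int n" using s0(2) unfolding t_def by auto
    define l' where "l' = j s0 - (i s0 - h)"
    have jt: "j s0 = l' + t * int n" using it unfolding l'_def by simp
    have E1: "Edelta n (i s0) (j s0) = Edelta n h l'" using it jt Edelta_shift by simp
    have E2: "Edelta n (i s0 + d) (j s0) = Edelta n (h+d) l'"
      using it jt Edelta_shift[of n "h+d" t l'] by (simp add: algebra_simps)
    have "Mmat i j = Bl l'"
    proof (intro ext)
      fix a b
      have "Mmat k j a b = Mmat i j a b - Edelta n (i s0) (j s0) a b + Edelta n (i s0 + d) (j s0) a b"
        using upd_Mmat_left[OF i j n r s0(1)] s0(3) by simp
      then show "Mmat i j a b = Bl l' a b" using kB E1 E2 unfolding Bl_def by simp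
    qed
    moreover have "l' \<in> L"
    proof -
      have "Edelta n (k s0) (j s0) (h+d) l' \<le> Mmat k j (h+d) l'" by (rule Mmat_ge_term[OF kI j n r s0(1)])
      moreover have "k s0 = i s0 + d" using s0 by (simp add: upd_P)
      ultimately have "Edelta n (h+d) l' (h+d) l' \<le> B (h+d) l'" using E2 kB by simp
      then show ?thesis unfolding L_def by (simp add: Edelta_self)
    qed
    ultimately show ?thesis using s0 unfolding l'_def by auto
  qed
  have main: "int (card K) = (\<Sum>l\<in>L. (B h l + 1) * (if Mmat i j = Bl l then 1 else 0))"
  proof (cases "\<exists>l0\<in>L. Mmat i j = Bl l0")
    case False
    have "K = {}" using key False by blast
    moreover have "(\<Sum>l\<in>L. (B h l + 1) * (if Mmat i j = Bl l then 1 else 0)) = 0"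
      using False by (intro sum.neutral) auto
    ultimately show ?thesis by simp
  next
    case True
    then obtain l0 where l0: "l0 \<in> L" "Mmat i j = Bl l0" by blast
    have iff: "Mmat i j = Bl l \<longleftrightarrow> l = l0" for l
      using l0(2) Bl_inj[where d=d and B=B and h=h and n=n and l=l0 and l'=l, OF d] unfolding Bl_def by metis
    have "(\<Sum>l\<in>L. (B h l + 1) * (if Mmat i j = Bl l then 1 else 0)) = (\<Sum>l\<in>L. if l = l0 then B h l + 1 else 0)"
      using iff by (intro sum.cong) auto
    also have "\<dots> = B h l0 + 1" using finL l0(1) by simp
    finally have rhs: "(\<Sum>l\<in>L. (B h l + 1) * (if Mmat i j = Bl l then 1 else 0)) = B h l0 + 1" .
    define Q where "Q = {s\<in>?P. int n dvd (h - i s) \<and> l0 - j s = h - i s}"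
    have "Mmat i j h l0 = (\<Sum>s\<in>?P. if int n dvd (h - i s) \<and> l0 - j s = h - i s then 1 else 0)"
      unfolding Mmat_sum[OF i j n r] by (rule sum.cong) (auto simp: Edelta_eq)
    also have "\<dots> = int (card Q)" unfolding Q_def by (simp add: sum.inter_filter[symmetric])
    finally have cQ1: "Mmat i j h l0 = int (card Q)" .
    have "Mmat i j h l0 = B h l0 + 1" using l0(2) d unfolding Bl_def by (simp add: Edelta_self Edelta_eq)
    with cQ1 have cQ: "int (card Q) = B h l0 + 1" by simp
    have KQ: "K = upd i r d ` Q"
    proof
      show "K \<subseteq> upd i r d ` Q"
      proof
        fix k assume k: "k \<in> K"
        obtain s0 where s0: "s0 \<in> ?P" "int n dvd (i s0 - h)" "k = upd i r d s0"
          "Mmat i j = Bl (j s0 - (i s0 - h))" using key[OF k] by blast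
        have "j s0 - (i s0 - h) = l0" using iff s0(4) by blast
        then have "s0 \<in> Q" using s0 unfolding Q_def by (auto simp: dvd_diff_commute)
        then show "k \<in> upd i r d ` Q" using s0(3) by blast
      qed
      show "upd i r d ` Q \<subseteq> K"
      proof
        fix k assume "k \<in> upd i r d ` Q"
        then obtain s0 where s0Q: "s0 \<in> Q" and k: "k = upd i r d s0" by blast
        have s0: "s0 \<in> ?P" "int n dvd (h - i s0)" "l0 - j s0 = h - i s0" using s0Q unfolding Q_def by auto
        define t where "t = (i s0 - h) div int n"
        have it: "i s0 = h + t * int n" using s0(2) unfolding t_def by (auto simp: dvd_diff_commute)
        have jt: "j s0 = l0 + t * int n" using it s0(3) by simp
        have E1: "Edelta n (i s0) (j s0) = Edelta n h l0" using it jt Edelta_shift by simp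
        have E2: "Edelta n (i s0 + d) (j s0) = Edelta n (h+d) l0"
          using it jt Edelta_shift[of n "h+d" t l0] by (simp add: algebra_simps)
        have E3: "Edelta n (i s0) (i s0) = Edelta n h h" using it Edelta_shift[of n h t h] by simp
        have E4: "Edelta n (i s0) (i s0 + d) = Edelta n h (h+d)"
          using it Edelta_shift[of n h t "h+d"] by (simp add: algebra_simps)
        have v1: "evec n (i s0) = evec n h" using it evec_shift by simp
        have v2: "evec n (i s0 + d) = evec n (h+d)" using it evec_shift[of n "h+d" t] by (simp add: algebra_simps)
        have kI: "k \<in> Idelta n r" using k upd_Idelta[OF i] by simp
        have kB: "Mmat k j = B"
        proof (intro ext)
          fix a b
          show "Mmat k j a b = B a b"
            using upd_Mmat_left[OF i j n r s0(1), of d a b] k E1 E2 l0(2) unfolding Bl_def by simp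
        qed
        have kA: "Mmat i k = A"
        proof (intro ext)
          fix a b
          have ro: "ro B a = (\<Sum>s\<in>?P. evec n (i s) a) - evec n h a + evec n (h+d) a"
            using ro_Mmat[OF kI j n r, of a] kB upd_content[OF s0(1), of n i d a] k v1 v2 by simp
          have Ehh: "Edelta n h h a b = (if a = b then evec n h a else 0)"
            by (auto simp: Edelta_eq evec_def mod_eq_dvd_iff)
          have "Mmat i k a b = Mmat i i a b - Edelta n h h a b + Edelta n h (h+d) a b"
            using upd_Mmat_right[OF i n r s0(1), of d a b] k E3 E4 by simp
          also have "\<dots> = A a b"
            unfolding A_def diagm_def Mmat_diag[OF i n r] Ehh using ro by auto
          finally show "Mmat i k a b = A a b" .
        qed
        show "k \<in> K" unfolding K_def using kI kA kB by simp
      qed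
    qed
    have inj: "inj_on (upd i r d) Q"
    proof (rule inj_onI)
      fix s0 s1 assume s0: "s0 \<in> Q" and s1: "s1 \<in> Q" and eq: "upd i r d s0 = upd i r d s1"
      have "s0 \<in> ?P" using s0 unfolding Q_def by auto
      then have "upd i r d s0 s0 = i s0 + d" "upd i r d s1 s0 = (if s0 = s1 then i s0 + d else i s0)"
        by (simp_all add: upd_P)
      then show "s0 = s1" using eq d by (metis add_cancel_left_right)
    qed
    have "card K = card Q" using KQ card_image[OF inj] by simp
    then show ?thesis using rhs cQ by simp
  qed
  then show ?thesis unfolding K_def A_def L_def Bl_def .
qed



lemma fin_col:
  assumes n: "n > 0" and r: "r > 0" and B: "B \<in> Theta n r" and j: "j \<in> Idelta n r"
  shows "finite {k\<in>Idelta n r. Mmat k j = B}"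
proof (rule inj_on_finite[where f="\<lambda>k. restrict k {0..<int r}"])
  show "inj_on (\<lambda>k. restrict k {0..<int r}) {k\<in>Idelta n r. Mmat k j = B}"
  proof (rule inj_onI)
    fix k k' assume k: "k \<in> {k\<in>Idelta n r. Mmat k j = B}" and k': "k' \<in> {k\<in>Idelta n r. Mmat k j = B}"
      and eq: "restrict k {0..<int r} = restrict k' {0..<int r}"
    show "k = k'"
    proof (rule Idelta_eq_on_P[OF _ _ r])
      show "k \<in> Idelta n r" "k' \<in> Idelta n r" using k k' by auto
      fix s assume "s \<in> {0..<int r}"
      then show "k s = k' s" using fun_cong[OF eq, of s] by simp
    qed
  qed
  show "(\<lambda>k. restrict k {0..<int r}) ` {k\<in>Idelta n r. Mmat k j = B} \<subseteq> PiE {0..<int r} (\<lambda>s. {a. B a (j s) \<noteq> 0})"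
  proof
    fix f assume "f \<in> (\<lambda>k. restrict k {0..<int r}) ` {k\<in>Idelta n r. Mmat k j = B}"
    then obtain k where k: "k \<in> Idelta n r" "Mmat k j = B" and f: "f = restrict k {0..<int r}" by blast
    have "B (k s) (j s) \<noteq> 0" if s: "s \<in> {0..<int r}" for s
      using Mmat_ge_term[OF k(1) j n r s, of "k s" "j s"] k(2) Edelta_self by (metis not_one_le_zero)
    then show "f \<in> PiE {0..<int r} (\<lambda>s. {a. B a (j s) \<noteq> 0})" using f by auto
  qed
  show "finite (PiE {0..<int r} (\<lambda>s. {a. B a (j s) \<noteq> 0}))"
    by (rule finite_PiE) (auto intro: col_finite[OF B n])
qed

lemma sum_if_const:
  fixes c :: "'a::comm_ring_1"
  assumes "finite S"
  shows "(\<Sum>k\<in>S. if P k then c else 0) = c * of_nat (card {k\<in>S. P k})"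
proof -
  have "(\<Sum>k\<in>S. if P k then c else 0) = (\<Sum>k\<in>{k\<in>S. P k}. c)"
    using sum.inter_filter[OF assms, of "\<lambda>_. c" P] by simp
  then show ?thesis by (simp add: mult.commute)
qed

lemma general:
  assumes n: "n > 0" and r: "r > 0" and B: "B \<in> Theta n r" and d: "d \<noteq> 0"
    and ro1: "ro B (h + d) \<ge> 1" and v: "v \<in> Omega n r"
  shows "stdmap n r (\<lambda>k l. Edelta n h (h + d) k l + diagm (\<lambda>t. ro B t - evec n (h + d) t) k l) (stdmap n r B v)
      = (\<lambda>w. \<Sum>i\<in>{i. B (h + d) i \<ge> 1}. of_int (B h i + 1) * stdmap n r (\<lambda>k l. B k l + Edelta n h i k l - Edelta n (h + d) i k l) v w)"
proof (rule ext)
  fix w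
  define A where "A = (\<lambda>k l. Edelta n h (h + d) k l + diagm (\<lambda>t. ro B t - evec n (h + d) t) k l)"
  define Bl where "Bl = (\<lambda>i k l. B k l + Edelta n h i k l - Edelta n (h + d) i k l)"
  define L where "L = {i. B (h + d) i \<ge> 1}"
  define V where "V = {j. v j \<noteq> 0}"
  define I where "I = Idelta n r"
  have finV: "finite V" and VI: "V \<subseteq> I" using v unfolding V_def I_def Omega_def by auto
  have Bnn: "\<forall>k l. 0 \<le> B k l" using B by (simp add: Theta_def)
  have Ann: "\<forall>k l. 0 \<le> A k l"
  proof (intro allI)
    fix a b
    have "0 \<le> ro B a - evec n (h + d) a"
    proof (cases "a mod int n = (h + d) mod int n")
      case True
      then have "a = (h + d) + ((a - (h + d)) div int n) * int n"
        by (metis add.commute diff_add_cancel mod_eq_dvd_iff dvd_div_mult_self)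
      then have "ro B a = ro B (h + d)" using ro_shift[OF B, of "h + d" "(a - (h + d)) div int n"] by simp
      then show ?thesis using ro1 by (simp add: evec_def)
    next
      case False
      then show ?thesis using ro_nonneg[OF B, of a] by (simp add: evec_def)
    qed
    moreover have "0 \<le> Edelta n h (h + d) a b" by (simp add: Edelta_eq)
    ultimately show "0 \<le> A a b" unfolding A_def diagm_def by auto
  qed
  have Blnn: "\<forall>a b. 0 \<le> Bl l a b" if l: "l \<in> L" for l
  proof (intro allI)
    fix a b
    show "0 \<le> Bl l a b"
    proof (cases "Edelta n (h + d) l a b = 1")
      case True
      then have dv: "int n dvd (a - (h + d))" and eq: "b - l = a - (h + d)" by (auto simp: Edelta_eq split: if_splits)
      define q where "q = (a - (h + d)) div int n"
      have "a = (h + d) + q * int n" using dv unfolding q_def by auto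
      moreover have "b = l + q * int n" using eq calculation by simp
      ultimately have "B a b = B (h + d) l" using Theta_shift[OF B] by simp
      then show ?thesis using l True Bnn unfolding Bl_def L_def by (simp add: Edelta_eq)
    next
      case False
      then have "Edelta n (h + d) l a b = 0" using Edelta_01 by metis
      then show ?thesis using Bnn unfolding Bl_def by (simp add: Edelta_eq)
    qed
  qed
  define u where "u = stdmap n r B v"
  have u_eq: "u k = (if k \<in> I then (\<Sum>j\<in>V. if Mmat k j = B then v j else 0) else 0)" for k
    unfolding u_def stdmap_def I_def V_def using Bnn by simp
  show "stdmap n r A u w = (\<Sum>i\<in>L. of_int (B h i + 1) * stdmap n r (Bl i) v w)"
  proof (cases "w \<in> I")
    case False
    then show ?thesis unfolding stdmap_def I_def by simp
  next
    case wI: True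
    define U' where "U' = (\<Union>j\<in>V. {k\<in>I. Mmat k j = B})"
    have finU': "finite U'" unfolding U'_def
    proof (rule finite_UN_I[OF finV])
      fix j assume "j \<in> V"
      then show "finite {k\<in>I. Mmat k j = B}" using VI fin_col[OF n r B, of j] unfolding I_def by blast
    qed
    have UU: "{k. u k \<noteq> 0} \<subseteq> U'"
    proof
      fix k assume "k \<in> {k. u k \<noteq> 0}"
      then have "k \<in> I" "(\<Sum>j\<in>V. if Mmat k j = B then v j else 0) \<noteq> 0" using u_eq[of k] by (auto split: if_splits)
      then obtain j where "j \<in> V" "(if Mmat k j = B then v j else 0) \<noteq> 0"
        using sum.neutral[of V "\<lambda>j. if Mmat k j = B then v j else 0"] by blast
      then have "j \<in> V" "Mmat k j = B" by (auto split: if_splits)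
      then show "k \<in> U'" unfolding U'_def using \<open>k \<in> I\<close> by blast
    qed
    have "stdmap n r A u w = (\<Sum>k\<in>{k. u k \<noteq> 0}. if Mmat w k = A then u k else 0)"
      unfolding stdmap_def using Ann wI unfolding I_def by simp
    also have "\<dots> = (\<Sum>k\<in>U'. if Mmat w k = A then u k else 0)"
      by (rule sum.mono_neutral_left[OF finU' UU]) auto
    also have "\<dots> = (\<Sum>k\<in>U'. \<Sum>j\<in>V. if Mmat w k = A \<and> Mmat k j = B then v j else 0)"
    proof (rule sum.cong[OF refl])
      fix k assume "k \<in> U'"
      then have "k \<in> I" unfolding U'_def by blast
      then show "(if Mmat w k = A then u k else 0) = (\<Sum>j\<in>V. if Mmat w k = A \<and> Mmat k j = B then v j else 0)"
        using u_eq[of k] by (cases "Mmat w k = A") (simp_all add: sum.neutral)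
    qed
    also have "\<dots> = (\<Sum>j\<in>V. \<Sum>k\<in>U'. if Mmat w k = A \<and> Mmat k j = B then v j else 0)" by (rule sum.swap)
    also have "\<dots> = (\<Sum>j\<in>V. v j * of_nat (card {k\<in>I. Mmat w k = A \<and> Mmat k j = B}))"
    proof (rule sum.cong[OF refl])
      fix j assume j: "j \<in> V"
      have "{k\<in>U'. Mmat w k = A \<and> Mmat k j = B} = {k\<in>I. Mmat w k = A \<and> Mmat k j = B}"
        using j unfolding U'_def by blast
      then show "(\<Sum>k\<in>U'. if Mmat w k = A \<and> Mmat k j = B then v j else 0) = v j * of_nat (card {k\<in>I. Mmat w k = A \<and> Mmat k j = B})"
        using sum_if_const[OF finU', of "\<lambda>k. Mmat w k = A \<and> Mmat k j = B" "v j"] by simp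
    qed
    also have "\<dots> = (\<Sum>j\<in>V. v j * of_int (\<Sum>l\<in>L. (B h l + 1) * (if Mmat w j = Bl l then 1 else 0)))"
    proof (rule sum.cong[OF refl])
      fix j assume j: "j \<in> V"
      have cc: "int (card {k\<in>I. Mmat w k = A \<and> Mmat k j = B}) = (\<Sum>l\<in>L. (B h l + 1) * (if Mmat w j = Bl l then 1 else 0))"
        using core[OF n r B d, of w j h] wI j VI unfolding I_def A_def L_def Bl_def by auto
      then have "(of_nat (card {k\<in>I. Mmat w k = A \<and> Mmat k j = B}) :: rat) = of_int (\<Sum>l\<in>L. (B h l + 1) * (if Mmat w j = Bl l then 1 else 0))"
        using arg_cong[where f="of_int :: int \<Rightarrow> rat", OF cc] by (simp only: of_int_of_nat_eq)
      then show "v j * of_nat (card {k\<in>I. Mmat w k = A \<and> Mmat k j = B}) = v j * of_int (\<Sum>l\<in>L. (B h l + 1) * (if Mmat w j = Bl l then 1 else 0))"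
        by simp
    qed
    also have "\<dots> = (\<Sum>j\<in>V. \<Sum>l\<in>L. of_int (B h l + 1) * (if Mmat w j = Bl l then v j else 0))"
    proof (rule sum.cong[OF refl])
      fix j assume "j \<in> V"
      have "v j * of_int (\<Sum>l\<in>L. (B h l + 1) * (if Mmat w j = Bl l then 1 else 0))
          = (\<Sum>l\<in>L. v j * of_int ((B h l + 1) * (if Mmat w j = Bl l then 1 else 0)))"
        by (simp only: of_int_sum sum_distrib_left)
      also have "\<dots> = (\<Sum>l\<in>L. of_int (B h l + 1) * (if Mmat w j = Bl l then v j else 0))"
      proof (rule sum.cong[OF refl])
        fix l assume "l \<in> L"
        show "v j * of_int ((B h l + 1) * (if Mmat w j = Bl l then 1 else 0)) = of_int (B h l + 1) * (if Mmat w j = Bl l then v j else 0)"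
          by (cases "Mmat w j = Bl l") (simp_all add: mult.commute del: of_int_add)
      qed
      finally show "v j * of_int (\<Sum>l\<in>L. (B h l + 1) * (if Mmat w j = Bl l then 1 else 0))
          = (\<Sum>l\<in>L. of_int (B h l + 1) * (if Mmat w j = Bl l then v j else 0))" .
    qed
    also have "\<dots> = (\<Sum>l\<in>L. \<Sum>j\<in>V. of_int (B h l + 1) * (if Mmat w j = Bl l then v j else 0))" by (rule sum.swap)
    also have "\<dots> = (\<Sum>l\<in>L. of_int (B h l + 1) * stdmap n r (Bl l) v w)"
    proof (rule sum.cong[OF refl])
      fix l assume l: "l \<in> L"
      show "(\<Sum>j\<in>V. of_int (B h l + 1) * (if Mmat w j = Bl l then v j else 0)) = of_int (B h l + 1) * stdmap n r (Bl l) v w"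
        unfolding stdmap_def using Blnn[OF l] wI unfolding I_def V_def by (simp add: sum_distrib_left)
    qed
    finally show ?thesis .
  qed
qed



theorem proposition6p2p3:
  fixes n r :: nat and h :: int and B :: "int \<Rightarrow> int \<Rightarrow> int"
  assumes "n \<ge> 2" and "r \<ge> 1" and "1 \<le> h" and "h \<le> int n"
    and "B \<in> Theta n r"
  shows
   "(\<forall>\<epsilon>::int. (\<epsilon> = 1 \<or> \<epsilon> = -1) \<and> ro B (h + \<epsilon>) \<ge> 1 \<longrightarrow>
      (\<forall>v \<in> Omega n r.
        stdmap n r (\<lambda>k l. Edelta n h (h + \<epsilon>) k l
                          + diagm (\<lambda>t. ro B t - evec n (h + \<epsilon>) t) k l)
          (stdmap n r B v)
        = (\<lambda>w. \<Sum>i\<in>{i. B (h + \<epsilon>) i \<ge> 1}.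
              of_int (B h i + 1) *
              stdmap n r (\<lambda>k l. B k l + Edelta n h i k l - Edelta n (h + \<epsilon>) i k l) v w)))
    \<and>
    (\<forall>m::int. m \<noteq> 0 \<and> ro B h \<ge> 1 \<longrightarrow>
      (\<forall>v \<in> Omega n r.
        stdmap n r (\<lambda>k l. Edelta n h (h + m * int n) k l
                          + diagm (\<lambda>t. ro B t - evec n h t) k l)
          (stdmap n r B v)
        = (\<lambda>w. \<Sum>s\<in>{s. B h s \<ge> 1}.
              of_int (B h (s + m * int n) + 1) *
              stdmap n r (\<lambda>k l. B k l + Edelta n h (s + m * int n) k l - Edelta n h s k l) v w)))"
proof (intro conjI allI impI ballI)
  have n: "n > 0" and r: "r > 0" using assms by auto
  note B = assms(5)
  {
    fix \<epsilon> :: int and v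
    assume e: "(\<epsilon> = 1 \<or> \<epsilon> = -1) \<and> ro B (h + \<epsilon>) \<ge> 1" and v: "v \<in> Omega n r"
    have d: "\<epsilon> \<noteq> 0" using e by auto
    show "stdmap n r (\<lambda>k l. Edelta n h (h + \<epsilon>) k l
                          + diagm (\<lambda>t. ro B t - evec n (h + \<epsilon>) t) k l)
          (stdmap n r B v)
        = (\<lambda>w. \<Sum>i\<in>{i. B (h + \<epsilon>) i \<ge> 1}.
              of_int (B h i + 1) *
              stdmap n r (\<lambda>k l. B k l + Edelta n h i k l - Edelta n (h + \<epsilon>) i k l) v w)"
      using general[OF n r B d _ v] e by blast
  }
  {
    fix m :: int and v
    assume e: "m \<noteq> 0 \<and> ro B h \<ge> 1" and v: "v \<in> Omega n r"
    have d: "m * int n \<noteq> 0" using e n by simp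
    have ro1: "ro B (h + m * int n) \<ge> 1" using e ro_shift[OF B, of h m] by simp
    have G: "stdmap n r (\<lambda>k l. Edelta n h (h + m * int n) k l + diagm (\<lambda>t. ro B t - evec n (h + m * int n) t) k l) (stdmap n r B v)
      = (\<lambda>w. \<Sum>i\<in>{i. B (h + m * int n) i \<ge> 1}. of_int (B h i + 1) * stdmap n r (\<lambda>k l. B k l + Edelta n h i k l - Edelta n (h + m * int n) i k l) v w)"
      by (rule general[OF n r B d ro1 v])
    have ev: "evec n (h + m * int n) = evec n h" by (rule evec_shift)
    have RHS: "(\<Sum>i\<in>{i. B (h + m * int n) i \<ge> 1}. of_int (B h i + 1) * stdmap n r (\<lambda>k l. B k l + Edelta n h i k l - Edelta n (h + m * int n) i k l) v w)
       = (\<Sum>s\<in>{s. B h s \<ge> 1}. of_int (B h (s + m * int n) + 1) *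
              stdmap n r (\<lambda>k l. B k l + Edelta n h (s + m * int n) k l - Edelta n h s k l) v w)" for w
    proof (rule sum.reindex_bij_witness[where i="\<lambda>s. s + m * int n" and j="\<lambda>a. a - m * int n"])
      show "\<And>a. a \<in> {i. 1 \<le> B (h + m * int n) i} \<Longrightarrow> a - m * int n + m * int n = a" by simp
      show "\<And>a. a \<in> {i. 1 \<le> B (h + m * int n) i} \<Longrightarrow> a - m * int n \<in> {s. 1 \<le> B h s}"
        using Theta_shift[OF B, of h m] by (metis diff_add_cancel mem_Collect_eq)
      show "\<And>b. b \<in> {s. 1 \<le> B h s} \<Longrightarrow> b + m * int n - m * int n = b" by simp
      show "\<And>b. b \<in> {s. 1 \<le> B h s} \<Longrightarrow> b + m * int n \<in> {i. 1 \<le> B (h + m * int n) i}"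
        using Theta_shift[OF B] by simp
      fix a
      have "Edelta n h (a - m * int n) = Edelta n (h + m * int n) a"
        using Edelta_shift[of n h m "a - m * int n"] by simp
      then show "of_int (B h (a - m * int n + m * int n) + 1) *
              stdmap n r (\<lambda>k l. B k l + Edelta n h (a - m * int n + m * int n) k l - Edelta n h (a - m * int n) k l) v w
          = of_int (B h a + 1) * stdmap n r (\<lambda>k l. B k l + Edelta n h a k l - Edelta n (h + m * int n) a k l) v w"
        by simp
    qed
    show "stdmap n r (\<lambda>k l. Edelta n h (h + m * int n) k l
                          + diagm (\<lambda>t. ro B t - evec n h t) k l)
          (stdmap n r B v)
        = (\<lambda>w. \<Sum>s\<in>{s. B h s \<ge> 1}.
              of_int (B h (s + m * int n) + 1) *
              stdmap n r (\<lambda>k l. B k l + Edelta n h (s + m * int n) k l - Edelta n h s k l) v w)"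
      using G RHS unfolding ev by simp
  }
qed

end
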